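(* $20,21,22,23,24,25\notin\operatorname{Spec}(32_{65})$; that is, $\{20,21,22,23,24,25\}\cap\operatorname{Spec}(32_{65})=\emptyset$.
   Context: $32_{65}$ is the finite integral symmetric relation algebra with atoms $1'$, $a$, $b$, $c$, all symmetric, in which a diversity cycle $xyz$ (with $x,y,z\in\{a,b,c\}$) is mandatory (i.e. $x;y\ge z$) if it involves $a$ and forbidden (i.e. $x;y\cdot z=0$) otherwise. A representation over a set $U$ is an embedding into the full relation algebra on $U\times U$. $\operatorname{Spec}(A)$ is the set of cardinals $\alpha\le\omega$ such that $A$ has a representation over a set of cardinality $\alpha$. *)

theory Defs
  imports Main
begin

text \<open>The finite integral symmetric relation algebra 32_65, presented as the complex
  algebra of its atom structure: elements are sets of atoms.\<close>

datatype atom = Id' | Aa | Ba | Ca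

definition diversity :: "atom \<Rightarrow> bool" where
  "diversity x \<longleftrightarrow> x \<noteq> Id'"

text \<open>cycle x y z holds iff z \<le> x ; y for atoms x, y, z.\<close>
definition cycle :: "atom \<Rightarrow> atom \<Rightarrow> atom \<Rightarrow> bool" where
  "cycle x y z \<longleftrightarrow>
     (x = Id' \<and> y = z) \<or> (y = Id' \<and> x = z) \<or>
     (z = Id' \<and> x = y) \<or>
     (diversity x \<and> diversity y \<and> diversity z \<and> (x = Aa \<or> y = Aa \<or> z = Aa))"

definition ra_comp :: "atom set \<Rightarrow> atom set \<Rightarrow> atom set" where
  "ra_comp X Y = {z. \<exists>x\<in>X. \<exists>y\<in>Y. cycle x y z}"

text \<open>All atoms are symmetric, so converse is the identity.\<close>
definition ra_conv :: "atom set \<Rightarrow> atom set" where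
  "ra_conv X = X"

definition ra_one :: "atom set" where
  "ra_one = {Id'}"

definition representation :: "'u set \<Rightarrow> (atom set \<Rightarrow> ('u \<times> 'u) set) \<Rightarrow> bool" where
  "representation U h \<longleftrightarrow>
     inj h \<and>
     (\<forall>X Y. h (X \<union> Y) = h X \<union> h Y) \<and>
     (\<forall>X. h (- X) = (U \<times> U) - h X) \<and>
     (\<forall>X Y. h (ra_comp X Y) = h X O h Y) \<and>
     (\<forall>X. h (ra_conv X) = converse (h X)) \<and>
     h ra_one = Id_on U"

definition representable_over :: "'u set \<Rightarrow> bool" where
  "representable_over U \<longleftrightarrow> (\<exists>h. representation U h)"

end

theory Submission
  imports Defs
begin

locale g32 =
  fixes U :: "'u set" and A B C :: "('u \<times> 'u) set"
  assumes fin: "finite U"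
  and domA: "(u,v) \<in> A \<Longrightarrow> u \<in> U \<and> v \<in> U"
  and domB: "(u,v) \<in> B \<Longrightarrow> u \<in> U \<and> v \<in> U"
  and domC: "(u,v) \<in> C \<Longrightarrow> u \<in> U \<and> v \<in> U"
  and irrA: "(u,u) \<notin> A"
  and irrB: "(u,u) \<notin> B"
  and irrC: "(u,u) \<notin> C"
  and tot: "u \<in> U \<Longrightarrow> v \<in> U \<Longrightarrow> u \<noteq> v \<Longrightarrow> (u,v) \<in> A \<or> (u,v) \<in> B \<or> (u,v) \<in> C"
  and dAB: "(u,v) \<in> A \<Longrightarrow> (u,v) \<notin> B"
  and dAC: "(u,v) \<in> A \<Longrightarrow> (u,v) \<notin> C"
  and dBC: "(u,v) \<in> B \<Longrightarrow> (u,v) \<notin> C"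
  and symA: "(u,v) \<in> A \<Longrightarrow> (v,u) \<in> A"
  and symB: "(u,v) \<in> B \<Longrightarrow> (v,u) \<in> B"
  and symC: "(u,v) \<in> C \<Longrightarrow> (v,u) \<in> C"
  and tri: "(u,v) \<in> B \<union> C \<Longrightarrow> (v,w) \<in> B \<union> C \<Longrightarrow> (u,w) \<notin> B \<union> C"
  and AAI: "u \<in> U \<Longrightarrow> \<exists>w. (u,w) \<in> A"
  and ABA: "(u,v) \<in> A \<Longrightarrow> \<exists>w. (u,w) \<in> A \<and> (w,v) \<in> B"
  and ACA: "(u,v) \<in> A \<Longrightarrow> \<exists>w. (u,w) \<in> A \<and> (w,v) \<in> C"
  and BBA: "(u,v) \<in> A \<Longrightarrow> \<exists>w. (u,w) \<in> B \<and> (w,v) \<in> B"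
  and BCA: "(u,v) \<in> A \<Longrightarrow> \<exists>w. (u,w) \<in> B \<and> (w,v) \<in> C"
  and CBA: "(u,v) \<in> A \<Longrightarrow> \<exists>w. (u,w) \<in> C \<and> (w,v) \<in> B"
  and CCA: "(u,v) \<in> A \<Longrightarrow> \<exists>w. (u,w) \<in> C \<and> (w,v) \<in> C"
begin

lemma swap_ok: "g32 U A C B"
  apply unfold_locales
  subgoal by (fact fin)
  subgoal by (fact domA)
  subgoal by (fact domC)
  subgoal by (fact domB)
  subgoal by (fact irrA)
  subgoal by (fact irrC)
  subgoal by (fact irrB)
  subgoal for u v using tot[of u v] by blast
  subgoal by (fact dAC)
  subgoal by (fact dAB)
  subgoal for u v using dBC[of u v] by blast
  subgoal by (fact symA)
  subgoal by (fact symC)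
  subgoal by (fact symB)
  subgoal for u v w using tri[of u v w] by (simp add: Un_commute)
  subgoal by (fact AAI)
  subgoal by (fact ACA)
  subgoal by (fact ABA)
  subgoal by (fact CCA)
  subgoal by (fact CBA)
  subgoal by (fact BCA)
  subgoal by (fact BBA)
  done

lemma key:
  assumes sw: "(s,w) \<in> A"
  shows "\<exists>t z1 z2 z3 z4. (s,t) \<in> A \<and> (t,w) \<in> B \<and> (s,z1) \<in> B \<and> (s,z2) \<in> B \<and>
    (s,z3) \<in> B \<and> (s,z4) \<in> B \<and> (z1,w) \<in> B \<and> (z2,w) \<in> C \<and> (z3,t) \<in> B \<and> (z4,t) \<in> C \<and>
    z1 \<noteq> z2 \<and> z1 \<noteq> z3 \<and> z1 \<noteq> z4 \<and> z2 \<noteq> z3 \<and> z2 \<noteq> z4 \<and> z3 \<noteq> z4"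
proof -
  obtain t where t1: "(s,t) \<in> A" and t2: "(t,w) \<in> B" using ABA[OF sw] by blast
  obtain z1 where z1: "(s,z1) \<in> B" "(z1,w) \<in> B" using BBA[OF sw] by blast
  obtain z2 where z2: "(s,z2) \<in> B" "(z2,w) \<in> C" using BCA[OF sw] by blast
  obtain z3 where z3: "(s,z3) \<in> B" "(z3,t) \<in> B" using BBA[OF t1] by blast
  obtain z4 where z4: "(s,z4) \<in> B" "(z4,t) \<in> C" using BCA[OF t1] by blast
  have tw: "(t,w) \<in> B \<union> C" using t2 by blast
  have n12: "z1 \<noteq> z2" using z1 z2 dBC by blast
  have n34: "z3 \<noteq> z4" using z3 z4 dBC by blast
  have nw: "z \<noteq> z'" if "(z,w) \<in> B \<union> C" "(z',t) \<in> B \<union> C" for z z'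
  proof
    assume "z = z'"
    then have "(w,z) \<in> B \<union> C" "(z,t) \<in> B \<union> C" using that symB symC by blast+
    then have "(w,t) \<notin> B \<union> C" by (rule tri)
    then show False using t2 symB by blast
  qed
  have "z1 \<noteq> z3" "z1 \<noteq> z4" "z2 \<noteq> z3" "z2 \<noteq> z4"
    using nw z1 z2 z3 z4 by blast+
  then show ?thesis using t1 t2 z1 z2 z3 z4 n12 n34 by blast
qed

lemma finB: "finite {z. (s,z) \<in> B}"
  by (rule finite_subset[OF _ fin]) (auto dest: domB)

lemma finA: "finite {z. (s,z) \<in> A}"
  by (rule finite_subset[OF _ fin]) (auto dest: domA)

lemma finE: "finite {z. (s,z) \<in> B \<union> C}"
  by (rule finite_subset[OF _ fin]) (auto dest: domB domC)

lemma b5: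
  assumes sU: "s \<in> U"
  shows "5 \<le> card {z. (s,z) \<in> B}"
proof (rule ccontr)
  let ?P = "{z. (s,z) \<in> B}"
  assume "\<not> 5 \<le> card ?P"
  then have c4: "card ?P \<le> 4" by simp
  have fill: "?P = {z1,z2,z3,z4}" if "z1 \<in> ?P" "z2 \<in> ?P" "z3 \<in> ?P" "z4 \<in> ?P"
    "z1 \<noteq> z2" "z1 \<noteq> z3" "z1 \<noteq> z4" "z2 \<noteq> z3" "z2 \<noteq> z4" "z3 \<noteq> z4" for z1 z2 z3 z4
  proof -
    have sub: "{z1,z2,z3,z4} \<subseteq> ?P" using that by blast
    have "card {z1,z2,z3,z4} = 4" using that by simp
    then show ?thesis using card_seteq[OF finB sub] c4 by simp
  qed
  obtain w where sw: "(s,w) \<in> A" using AAI[OF sU] by blast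
  obtain t z1 z2 z3 z4 where k: "(s,z1) \<in> B" "(s,z2) \<in> B" "(s,z3) \<in> B" "(s,z4) \<in> B"
     "z1 \<noteq> z2" "z1 \<noteq> z3" "z1 \<noteq> z4" "z2 \<noteq> z3" "z2 \<noteq> z4" "z3 \<noteq> z4"
    using key[OF sw] by blast
  have z12A: "(z1,z2) \<in> A"
  proof -
    have "z1 \<in> U" "z2 \<in> U" using k domB by blast+
    moreover have "(z1,z2) \<notin> B \<union> C"
      by (rule tri) (use k symB in blast)+
    ultimately show ?thesis using tot k(5) by blast
  qed
  obtain u where u1: "(z1,u) \<in> C" and u2: "(u,z2) \<in> C" using CCA[OF z12A] by blast
  have su: "(s,u) \<in> A"
  proof -
    have "u \<in> U" using u1 domC by blast
    moreover have "u \<noteq> s" using u1 k(1) symB dBC by blast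
    moreover have "(s,u) \<notin> B \<union> C"
      by (rule tri) (use k u1 in blast)+
    ultimately show ?thesis using tot sU by blast
  qed
  obtain t' y1 y2 y3 y4 where y: "(t',u) \<in> B" "(s,y1) \<in> B" "(s,y2) \<in> B" "(s,y3) \<in> B" "(s,y4) \<in> B"
     "(y1,u) \<in> B" "(y2,u) \<in> C" "(y3,t') \<in> B" "(y4,t') \<in> C"
     "y1 \<noteq> y2" "y1 \<noteq> y3" "y1 \<noteq> y4" "y2 \<noteq> y3" "y2 \<noteq> y4" "y3 \<noteq> y4"
    using key[OF su] by blast
  have Py: "?P = {y1,y2,y3,y4}" by (rule fill) (use y in auto)
  have is2: "z = y2" if "(s,z) \<in> B" "(z,u) \<in> C" for z
  proof -
    have "z \<in> {y1,y2,y3,y4}" using that Py by blast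
    moreover have "z \<noteq> y1" using that y dBC by blast
    moreover have "z \<noteq> y3"
    proof
      assume "z = y3"
      then have "(u,t') \<notin> B \<union> C" using tri[of u z t'] that y symC by blast
      then show False using y symB by blast
    qed
    moreover have "z \<noteq> y4"
    proof
      assume "z = y4"
      then have "(u,t') \<notin> B \<union> C" using tri[of u z t'] that y symC by blast
      then show False using y symB by blast
    qed
    ultimately show ?thesis by blast
  qed
  have "z1 = y2" using is2 k u1 by blast
  moreover have "z2 = y2" using is2 k u2 symC by blast
  ultimately show False using k(5) by simp
qed

lemma deg10:
  assumes "z \<in> U"
  shows "10 \<le> card {v. (z,v) \<in> B \<union> C}"
proof -
  have "{v. (z,v) \<in> B \<union> C} = {v. (z,v) \<in> B} \<union> {v. (z,v) \<in> C}" by blast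
  moreover have "{v. (z,v) \<in> B} \<inter> {v. (z,v) \<in> C} = {}" using dBC by blast
  moreover have "finite {v. (z,v) \<in> C}" by (rule g32.finB[OF swap_ok])
  ultimately have "card {v. (z,v) \<in> B \<union> C} = card {v. (z,v) \<in> B} + card {v. (z,v) \<in> C}"
    using finB card_Un_disjoint by metis
  moreover have "5 \<le> card {v. (z,v) \<in> B}" by (rule b5[OF assms])
  moreover have "5 \<le> card {v. (z,v) \<in> C}" by (rule g32.b5[OF swap_ok, OF assms])
  ultimately show ?thesis by linarith
qed

lemma dbl:
  assumes sU: "s \<in> U"
  shows "9 * card {z. (s,z) \<in> B} \<le> card {w. (s,w) \<in> A} * (card {z. (s,z) \<in> B} - 2)"
proof -
  let ?P = "{z. (s,z) \<in> B}"
  let ?R = "{w. (s,w) \<in> A}"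
  let ?E = "B \<union> C"
  have fP: "finite ?P" by (rule finB)
  have fR: "finite ?R" by (rule finA)
  have low: "9 \<le> card {w \<in> ?R. (z,w) \<in> ?E}" if zP: "z \<in> ?P" for z
  proof -
    have zU: "z \<in> U" using zP domB by blast
    have "{v. (z,v) \<in> ?E} \<subseteq> insert s {w \<in> ?R. (z,w) \<in> ?E}"
    proof
      fix v assume v: "v \<in> {v. (z,v) \<in> ?E}"
      show "v \<in> insert s {w \<in> ?R. (z,w) \<in> ?E}"
      proof (cases "v = s")
        case False
        have "v \<in> U" using v domB domC by blast
        moreover have "(s,v) \<notin> ?E" by (rule tri) (use zP v in blast)+
        ultimately have "(s,v) \<in> A" using tot sU False by blast
        then show ?thesis using v by blast
      qed simp
    qed
    then have "card {v. (z,v) \<in> ?E} \<le> card (insert s {w \<in> ?R. (z,w) \<in> ?E})"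
      by (rule card_mono[rotated]) (use fR in simp)
    also have "\<dots> \<le> Suc (card {w \<in> ?R. (z,w) \<in> ?E})"
      by (simp add: card_insert_le_m1 card_insert_if fR)
    finally show ?thesis using deg10[OF zU] by linarith
  qed
  have up: "card {z \<in> ?P. (w,z) \<in> ?E} \<le> card ?P - 2" if wR: "w \<in> ?R" for w
  proof -
    obtain t z3 z4 where k: "(t,w) \<in> B" "(s,z3) \<in> B" "(s,z4) \<in> B" "(z3,t) \<in> B" "(z4,t) \<in> C"
      "z3 \<noteq> z4"
      using key[of s w] wR by blast
    have "{z \<in> ?P. (w,z) \<in> ?E} \<subseteq> ?P - {z3,z4}"
    proof
      fix z assume z: "z \<in> {z \<in> ?P. (w,z) \<in> ?E}"
      have "z \<noteq> z3"
      proof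
        assume "z = z3"
        then have "(w,t) \<notin> ?E" using tri[of w z t] z k by blast
        then show False using k symB by blast
      qed
      moreover have "z \<noteq> z4"
      proof
        assume "z = z4"
        then have "(w,t) \<notin> ?E" using tri[of w z t] z k by blast
        then show False using k symB by blast
      qed
      ultimately show "z \<in> ?P - {z3,z4}" using z by blast
    qed
    then have "card {z \<in> ?P. (w,z) \<in> ?E} \<le> card (?P - {z3,z4})"
      by (rule card_mono[rotated]) (use fP in simp)
    also have "card (?P - {z3,z4}) = card ?P - 2"
      using k fP by (subst card_Diff_subset) auto
    finally show ?thesis .
  qed
  have swapeq: "(\<lambda>(a,b). (b,a)) ` (SIGMA z:?P. {w \<in> ?R. (z,w) \<in> ?E}) = (SIGMA w:?R. {z \<in> ?P. (w,z) \<in> ?E})"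
    using symB symC by (auto simp: image_iff)
  have injs: "inj_on (\<lambda>(a,b). (b,a)) X" for X :: "('u \<times> 'u) set"
    by (auto simp: inj_on_def)
  have "9 * card ?P \<le> (\<Sum>z\<in>?P. card {w \<in> ?R. (z,w) \<in> ?E})"
    using sum_bounded_below[of ?P 9 "\<lambda>z. card {w \<in> ?R. (z,w) \<in> ?E}"] low by (simp add: mult.commute)
  also have "\<dots> = card (SIGMA z:?P. {w \<in> ?R. (z,w) \<in> ?E})"
    by (rule card_SigmaI[symmetric]) (use fP fR in auto)
  also have "\<dots> = card (SIGMA w:?R. {z \<in> ?P. (w,z) \<in> ?E})"
    by (subst swapeq[symmetric], rule card_image[symmetric], rule injs)
  also have "\<dots> = (\<Sum>w\<in>?R. card {z \<in> ?P. (w,z) \<in> ?E})"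
    by (rule card_SigmaI) (use fP fR in auto)
  also have "\<dots> \<le> card ?R * (card ?P - 2)"
    using sum_bounded_above[of ?R "\<lambda>w. card {z \<in> ?P. (w,z) \<in> ?E}" "card ?P - 2"] up by simp
  finally show ?thesis .
qed

lemma part:
  assumes sU: "s \<in> U"
  shows "card U = 1 + card {z. (s,z) \<in> B} + card {z. (s,z) \<in> C} + card {w. (s,w) \<in> A}"
proof -
  have U: "U = insert s ({z. (s,z) \<in> B} \<union> {z. (s,z) \<in> C} \<union> {w. (s,w) \<in> A})"
    using sU tot domA domB domC by blast
  have "card U = Suc (card ({z. (s,z) \<in> B} \<union> {z. (s,z) \<in> C} \<union> {w. (s,w) \<in> A}))"
    by (subst U, rule card_insert_disjoint) (use finA finB g32.finB[OF swap_ok] irrA irrB irrC in auto)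
  also have "card ({z. (s,z) \<in> B} \<union> {z. (s,z) \<in> C} \<union> {w. (s,w) \<in> A})
     = card ({z. (s,z) \<in> B} \<union> {z. (s,z) \<in> C}) + card {w. (s,w) \<in> A}"
    by (rule card_Un_disjoint) (use finA finB g32.finB[OF swap_ok] dAB dAC in auto)
  also have "card ({z. (s,z) \<in> B} \<union> {z. (s,z) \<in> C}) = card {z. (s,z) \<in> B} + card {z. (s,z) \<in> C}"
    by (rule card_Un_disjoint) (use finB g32.finB[OF swap_ok] dBC in auto)
  finally show ?thesis by simp
qed

lemma arith_aux:
  fixes b r R :: nat
  assumes "5 \<le> b" "b \<le> r" "9 * b \<le> R * (b - 2)" "1 + b + r + R \<le> 25"
  shows False
proof -
  have "R \<le> 24 - 2 * b" using assms by linarith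
  then have "R * (b - 2) \<le> (24 - 2 * b) * (b - 2)" by (rule mult_right_mono) simp
  then have h: "9 * b \<le> (24 - 2 * b) * (b - 2)" using assms(3) by linarith
  have "b \<le> 12" using assms by linarith
  then have "b \<in> {5..12}" using assms(1) by simp
  then have "b = 5 \<or> b = 6 \<or> b = 7 \<or> b = 8 \<or> b = 9 \<or> b = 10 \<or> b = 11 \<or> b = 12" by auto
  then show False using h by auto
qed

lemma small:
  assumes "U \<noteq> {}"
  shows "26 \<le> card U"
proof (rule ccontr)
  assume "\<not> 26 \<le> card U"
  obtain s where sU: "s \<in> U" using assms by blast
  have p: "card U = 1 + card {z. (s,z) \<in> B} + card {z. (s,z) \<in> C} + card {w. (s,w) \<in> A}"
    by (rule part[OF sU])
  have d1: "9 * card {z. (s,z) \<in> B} \<le> card {w. (s,w) \<in> A} * (card {z. (s,z) \<in> B} - 2)"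
    by (rule dbl[OF sU])
  have d2: "9 * card {z. (s,z) \<in> C} \<le> card {w. (s,w) \<in> A} * (card {z. (s,z) \<in> C} - 2)"
    by (rule g32.dbl[OF swap_ok, OF sU])
  have b: "5 \<le> card {z. (s,z) \<in> B}" by (rule b5[OF sU])
  have c: "5 \<le> card {z. (s,z) \<in> C}" by (rule g32.b5[OF swap_ok, OF sU])
  show False
  proof (cases "card {z. (s,z) \<in> B} \<le> card {z. (s,z) \<in> C}")
    case True
    show False by (rule arith_aux[OF b True d1]) (use p \<open>\<not> 26 \<le> card U\<close> in linarith)
  next
    case False
    then have le: "card {z. (s,z) \<in> C} \<le> card {z. (s,z) \<in> B}" by simp
    show False by (rule arith_aux[OF c le d2]) (use p \<open>\<not> 26 \<le> card U\<close> in linarith)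
  qed
qed

end

lemma rep_props:
  assumes r: "representation U h"
  shows "h {} = {}" and "\<And>X Y. X \<subseteq> Y \<Longrightarrow> h X \<subseteq> h Y" and "\<And>X. h X \<subseteq> U \<times> U"
    and "\<And>X Y. X \<inter> Y = {} \<Longrightarrow> h X \<inter> h Y = {}"
    and "h UNIV = U \<times> U"
    and "\<And>x y. h {x} O h {y} = h {z. cycle x y z}"
    and "\<And>X. converse (h X) = h X"
    and "h {Id'} = Id_on U"
proof -
  have un: "\<And>X Y. h (X \<union> Y) = h X \<union> h Y" and neg: "\<And>X. h (- X) = (U \<times> U) - h X"
    and cp: "\<And>X Y. h (ra_comp X Y) = h X O h Y" and cv: "\<And>X. h (ra_conv X) = converse (h X)"
    and one: "h ra_one = Id_on U"
    using r unfolding representation_def by blast+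
  show mono: "\<And>X Y. X \<subseteq> Y \<Longrightarrow> h X \<subseteq> h Y"
  proof -
    fix X Y :: "atom set" assume "X \<subseteq> Y"
    then have "Y = X \<union> Y" by blast
    then have "h Y = h X \<union> h Y" using un by metis
    then show "h X \<subseteq> h Y" by blast
  qed
  have hU: "h UNIV = U \<times> U - h {}" using neg[of "{}"] by simp
  have "h {} \<subseteq> h UNIV" by (rule mono) simp
  then show e: "h {} = {}" using hU by blast
  show hUU: "h UNIV = U \<times> U" using hU e by simp
  show "\<And>X. h X \<subseteq> U \<times> U" using mono[of _ UNIV] hUU by blast
  show "\<And>X Y. X \<inter> Y = {} \<Longrightarrow> h X \<inter> h Y = {}"
  proof -
    fix X Y :: "atom set" assume "X \<inter> Y = {}"
    then have "Y \<subseteq> - X" by blast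
    then have "h Y \<subseteq> U \<times> U - h X" using mono neg by metis
    then show "h X \<inter> h Y = {}" by blast
  qed
  show "\<And>x y. h {x} O h {y} = h {z. cycle x y z}"
  proof -
    fix x y
    have "ra_comp {x} {y} = {z. cycle x y z}" by (simp add: ra_comp_def)
    then show "h {x} O h {y} = h {z. cycle x y z}" using cp[of "{x}" "{y}"] by simp
  qed
  show "\<And>X. converse (h X) = h X" using cv by (simp add: ra_conv_def)
  show "h {Id'} = Id_on U" using one by (simp add: ra_one_def)
qed

lemma rep_g32:
  assumes r: "representation U h" and fU: "finite U"
  shows "g32 U (h {Aa}) (h {Ba}) (h {Ca})"
proof -
  note P = rep_props[OF r]
  have dom: "\<And>u v X. (u,v) \<in> h X \<Longrightarrow> u \<in> U \<and> v \<in> U" using P(3) by blast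
  have dj: "\<And>u v x y. x \<noteq> y \<Longrightarrow> (u,v) \<in> h {x} \<Longrightarrow> (u,v) \<notin> h {y}"
  proof -
    fix u v x y assume "x \<noteq> (y::atom)" "(u,v) \<in> h {x}"
    moreover have "h {x} \<inter> h {y} = {}" using P(4) \<open>x \<noteq> y\<close> by simp
    ultimately show "(u,v) \<notin> h {y}" by blast
  qed
  have irr: "\<And>u x. x \<noteq> Id' \<Longrightarrow> (u,u) \<notin> h {x}"
  proof
    fix u x assume "x \<noteq> Id'" "(u,u) \<in> h {x}"
    then have "u \<in> U" using dom by blast
    then have "(u,u) \<in> h {Id'}" using P(8) by auto
    then show False using dj \<open>x \<noteq> Id'\<close> \<open>(u,u) \<in> h {x}\<close> by metis
  qed
  have sym: "(v,u) \<in> h X" if "(u,v) \<in> h X" for u v X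
  proof -
    have "(v,u) \<in> converse (h X)" using that by simp
    then show ?thesis using P(7)[of X] by simp
  qed
  have un: "\<And>X Y. h (X \<union> Y) = h X \<union> h Y" using r unfolding representation_def by blast
  have cover: "h UNIV = h {Id'} \<union> h {Aa} \<union> h {Ba} \<union> h {Ca}"
  proof -
    have "(UNIV :: atom set) = {Id'} \<union> {Aa} \<union> {Ba} \<union> {Ca}"
    proof (intro set_eqI iffI)
      fix x :: atom show "x \<in> {Id'} \<union> {Aa} \<union> {Ba} \<union> {Ca}" by (cases x) auto
    qed simp
    then have "h UNIV = h ({Id'} \<union> {Aa} \<union> {Ba} \<union> {Ca})" by simp
    then show ?thesis by (simp only: un)
  qed
  have tot: "(u,v) \<in> h {Aa} \<or> (u,v) \<in> h {Ba} \<or> (u,v) \<in> h {Ca}"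
    if "u \<in> U" "v \<in> U" "u \<noteq> v" for u v
  proof -
    have "(u,v) \<in> h UNIV" using P(5) that by simp
    then have "(u,v) \<in> h {Id'} \<union> h {Aa} \<union> h {Ba} \<union> h {Ca}" using cover by simp
    moreover have "(u,v) \<notin> h {Id'}" using P(8) that by (auto simp: Id_on_def)
    ultimately show ?thesis by blast
  qed
  have comp: "\<And>u v w x y. (u,v) \<in> h {x} \<Longrightarrow> (v,w) \<in> h {y} \<Longrightarrow> (u,w) \<in> h {z. cycle x y z}"
    using P(6) by blast
  have mand: "\<And>u v x y z. cycle x y z \<Longrightarrow> (u,v) \<in> h {z} \<Longrightarrow> \<exists>w. (u,w) \<in> h {x} \<and> (w,v) \<in> h {y}"
  proof -
    fix u v x y z assume "cycle x y z" "(u,v) \<in> h {z}"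
    then have "(u,v) \<in> h {z. cycle x y z}" using P(2)[of "{z}" "{z. cycle x y z}"] by blast
    then show "\<exists>w. (u,w) \<in> h {x} \<and> (w,v) \<in> h {y}" using P(6) by blast
  qed
  have tri: "\<And>u v w. (u,v) \<in> h {Ba} \<union> h {Ca} \<Longrightarrow> (v,w) \<in> h {Ba} \<union> h {Ca} \<Longrightarrow>
      (u,w) \<notin> h {Ba} \<union> h {Ca}"
  proof
    fix u v w assume a: "(u,v) \<in> h {Ba} \<union> h {Ca}" "(v,w) \<in> h {Ba} \<union> h {Ca}"
      and b: "(u,w) \<in> h {Ba} \<union> h {Ca}"
    have sub: "\<And>x y. x \<in> {Ba,Ca} \<Longrightarrow> y \<in> {Ba,Ca} \<Longrightarrow> {z. cycle x y z} \<subseteq> {Id',Aa}"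
      by (auto simp: cycle_def diversity_def)
    obtain x y where xy: "x \<in> {Ba,Ca}" "y \<in> {Ba,Ca}" "(u,v) \<in> h {x}" "(v,w) \<in> h {y}"
      using a by blast
    have uw: "(u,w) \<in> h {Id',Aa}" using comp[OF xy(3,4)] P(2)[OF sub[OF xy(1,2)]] by blast
    have "h {Id',Aa} \<inter> h {Ba} = {}" by (rule P(4)) simp
    moreover have "h {Id',Aa} \<inter> h {Ca} = {}" by (rule P(4)) simp
    ultimately show False using uw b by blast
  qed
  have cyc: "cycle Aa Aa Id'" "cycle Aa Ba Aa" "cycle Aa Ca Aa" "cycle Ba Ba Aa" "cycle Ba Ca Aa"
    "cycle Ca Ba Aa" "cycle Ca Ca Aa"
    by (auto simp: cycle_def diversity_def)
  show ?thesis
    apply unfold_locales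
    subgoal by (rule fU)
    subgoal for u v by (rule dom)
    subgoal for u v by (rule dom)
    subgoal for u v by (rule dom)
    subgoal for u by (rule irr) simp
    subgoal for u by (rule irr) simp
    subgoal for u by (rule irr) simp
    subgoal for u v by (rule tot)
    subgoal for u v by (rule dj) simp_all
    subgoal for u v by (rule dj) simp_all
    subgoal for u v by (rule dj) simp_all
    subgoal for u v by (rule sym)
    subgoal for u v by (rule sym)
    subgoal for u v by (rule sym)
    subgoal for u v w by (rule tri)
    subgoal for u
    proof -
      assume "u \<in> U"
      then have "(u,u) \<in> h {Id'}" using P(8) by auto
      then show ?thesis using mand[OF cyc(1)] by blast
    qed
    subgoal for u v by (rule mand[OF cyc(2)])
    subgoal for u v by (rule mand[OF cyc(3)])
    subgoal for u v by (rule mand[OF cyc(4)])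
    subgoal for u v by (rule mand[OF cyc(5)])
    subgoal for u v by (rule mand[OF cyc(6)])
    subgoal for u v by (rule mand[OF cyc(7)])
    done
qed

theorem mainTheorem13:
  fixes U :: "'u set"
  assumes "finite U" and "card U \<in> {20, 21, 22, 23, 24, 25}"
  shows "\<not> representable_over U"
proof
  assume "representable_over U"
  then obtain h where r: "representation U h" unfolding representable_over_def by blast
  have g: "g32 U (h {Aa}) (h {Ba}) (h {Ca})" by (rule rep_g32[OF r assms(1)])
  have "U \<noteq> {}" using assms(2) by auto
  then have "26 \<le> card U" by (rule g32.small[OF g])
  then show False using assms(2) by auto
qed

end
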